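(* Let $T$ be a finite tree, $G=T^2$, and $\Bbbk$ a field. If $I(G)$ has a linear resolution, then $\mathrm{diam}(T)\le4$.
   Context: $T^2$ is the graph on $V(T)$ with edges the pairs at distance 1 or 2 in $T$. $I(G)=\langle x_ux_v:\{u,v\}\in E(G)\rangle\subseteq\Bbbk[x_v:v\in V(G)]$; it has a linear resolution if $\beta_{i,j}(I(G))=0$ for $j\ne i+2$. $\mathrm{diam}(T)$ is the maximum distance between two vertices of $T$. *)

theory Defs
  imports Main "HOL-Library.Poly_Mapping"
begin

definition simple_graph :: "'v set \<Rightarrow> ('v \<Rightarrow> 'v \<Rightarrow> bool) \<Rightarrow> bool" where
  "simple_graph V E \<longleftrightarrow> (\<forall>u v. E u v \<longrightarrow> u \<in> V \<and> v \<in> V \<and> u \<noteq> v \<and> E v u)"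

definition walk :: "'v set \<Rightarrow> ('v \<Rightarrow> 'v \<Rightarrow> bool) \<Rightarrow> 'v list \<Rightarrow> bool" where
  "walk V E p \<longleftrightarrow> p \<noteq> [] \<and> set p \<subseteq> V \<and> (\<forall>i. Suc i < length p \<longrightarrow> E (p ! i) (p ! Suc i))"

definition connected_graph :: "'v set \<Rightarrow> ('v \<Rightarrow> 'v \<Rightarrow> bool) \<Rightarrow> bool" where
  "connected_graph V E \<longleftrightarrow>
     (\<forall>u\<in>V. \<forall>v\<in>V. \<exists>p. walk V E p \<and> hd p = u \<and> last p = v)"

definition is_cycle :: "'v set \<Rightarrow> ('v \<Rightarrow> 'v \<Rightarrow> bool) \<Rightarrow> 'v list \<Rightarrow> bool" where
  "is_cycle V E c \<longleftrightarrow> walk V E c \<and> distinct c \<and> length c \<ge> 3 \<and> E (last c) (hd c)"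

definition tree :: "'v set \<Rightarrow> ('v \<Rightarrow> 'v \<Rightarrow> bool) \<Rightarrow> bool" where
  "tree V E \<longleftrightarrow> finite V \<and> V \<noteq> {} \<and> simple_graph V E \<and> connected_graph V E
     \<and> \<not> (\<exists>c. is_cycle V E c)"

definition dist :: "'v set \<Rightarrow> ('v \<Rightarrow> 'v \<Rightarrow> bool) \<Rightarrow> 'v \<Rightarrow> 'v \<Rightarrow> nat" where
  "dist V E u v = (LEAST n. \<exists>p. walk V E p \<and> hd p = u \<and> last p = v \<and> length p = Suc n)"

definition diam :: "'v set \<Rightarrow> ('v \<Rightarrow> 'v \<Rightarrow> bool) \<Rightarrow> nat" where
  "diam V E = Max {dist V E u v | u v. u \<in> V \<and> v \<in> V}"

definition graph_square :: "'v set \<Rightarrow> ('v \<Rightarrow> 'v \<Rightarrow> bool) \<Rightarrow> 'v \<Rightarrow> 'v \<Rightarrow> bool" where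
  "graph_square V E u v \<longleftrightarrow> u \<in> V \<and> v \<in> V \<and> u \<noteq> v \<and>
     (dist V E u v = 1 \<or> dist V E u v = 2)"

type_synonym ('v, 'k) mpoly = "('v \<Rightarrow>\<^sub>0 nat) \<Rightarrow>\<^sub>0 'k"

definition Var :: "'v \<Rightarrow> ('v, 'k::field) mpoly" where
  "Var v = Poly_Mapping.single (Poly_Mapping.single v 1) 1"

definition mdeg :: "('v \<Rightarrow>\<^sub>0 nat) \<Rightarrow> nat" where
  "mdeg m = (\<Sum>v\<in>Poly_Mapping.keys m. Poly_Mapping.lookup m v)"

definition polys_in :: "'v set \<Rightarrow> ('v, 'k::field) mpoly set" where
  "polys_in V = {p. \<forall>m\<in>Poly_Mapping.keys p. Poly_Mapping.keys m \<subseteq> V}"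

definition homogeneous :: "nat \<Rightarrow> ('v, 'k::field) mpoly \<Rightarrow> bool" where
  "homogeneous d p \<longleftrightarrow> (\<forall>m\<in>Poly_Mapping.keys p. mdeg m = d)"

definition ideal_gen :: "'v set \<Rightarrow> ('v, 'k::field) mpoly set \<Rightarrow> ('v, 'k) mpoly set" where
  "ideal_gen V S = {(\<Sum>i<(n::nat). c i * s i) | n c s. \<forall>i<n. c i \<in> polys_in V \<and> s i \<in> S}"

definition edge_ideal :: "'v set \<Rightarrow> ('v \<Rightarrow> 'v \<Rightarrow> bool) \<Rightarrow> ('v, 'k::field) mpoly set" where
  "edge_ideal V G = ideal_gen V {Var u * Var v | u v. u \<in> V \<and> v \<in> V \<and> G u v}"

definition free_mod :: "'v set \<Rightarrow> nat \<Rightarrow> (nat \<Rightarrow> ('v, 'k::field) mpoly) set" where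
  "free_mod V b = {x. (\<forall>j<b. x j \<in> polys_in V) \<and> (\<forall>j\<ge>b. x j = 0)}"

definition mat_apply :: "(nat \<Rightarrow> nat \<Rightarrow> ('v, 'k::field) mpoly) \<Rightarrow> nat
     \<Rightarrow> (nat \<Rightarrow> ('v, 'k) mpoly) \<Rightarrow> nat \<Rightarrow> ('v, 'k) mpoly" where
  "mat_apply M b x = (\<lambda>i. \<Sum>j<b. M i j * x j)"

text \<open>A graded free resolution
   0 <- I <-d0- F_0 <-d1- F_1 <- ... <- F_n <- 0  with  F_i = S(-i-2)^(b i):
  d0 sends the j-th basis vector to the homogeneous quadric g j, and d_k (k >= 1) is the
  b(k-1) x b(k) matrix M k whose entries are homogeneous linear forms (degree-0 graded maps).
  Such a resolution exists iff beta_{i,j}(I) = 0 for j <> i+2, i.e. iff I has a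
  linear resolution (a resolution of this form is automatically minimal).\<close>
definition has_linear_resolution :: "'v set \<Rightarrow> ('v, 'k::field) mpoly set \<Rightarrow> bool" where
  "has_linear_resolution V I \<longleftrightarrow>
    (\<exists>(b :: nat \<Rightarrow> nat) (g :: nat \<Rightarrow> ('v, 'k) mpoly)
        (M :: nat \<Rightarrow> nat \<Rightarrow> nat \<Rightarrow> ('v, 'k) mpoly) (n :: nat).
       (\<forall>k>n. b k = 0) \<and>
       (\<forall>j<b 0. g j \<in> polys_in V \<and> homogeneous 2 (g j)) \<and>
       ideal_gen V {g j | j. j < b 0} = I \<and>
       (\<forall>k\<ge>1. \<forall>i j. (i < b (k - 1) \<and> j < b k \<longrightarrow> M k i j \<in> polys_in V \<and> homogeneous 1 (M k i j))
                    \<and> (\<not> (i < b (k - 1) \<and> j < b k) \<longrightarrow> M k i j = 0)) \<and>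
       {x \<in> free_mod V (b 0). (\<Sum>j<b 0. x j * g j) = 0}
          = mat_apply (M 1) (b 1) ` free_mod V (b 1) \<and>
       (\<forall>k\<ge>1. {x \<in> free_mod V (b k). mat_apply (M k) (b k) x = (\<lambda>_. 0)}
          = mat_apply (M (Suc k)) (b (Suc k)) ` free_mod V (b (Suc k))))"

end

theory Submission
  imports Defs
begin

abbreviation ee :: "'v \<Rightarrow> ('v \<Rightarrow>\<^sub>0 nat)" where "ee v \<equiv> Poly_Mapping.single v 1"

lemma lookup_mult_set:
  fixes f g :: "('v, 'k::field) mpoly"
  assumes fin: "finite P"
    and sub1: "\<And>s q. s \<in> Poly_Mapping.keys f \<Longrightarrow> q \<in> Poly_Mapping.keys g \<Longrightarrow> k = s + q \<Longrightarrow> (s, q) \<in> P"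
    and sub2: "\<And>s q. (s, q) \<in> P \<Longrightarrow> k = s + q"
  shows "Poly_Mapping.lookup (f * g) k = (\<Sum>(s,q)\<in>P. Poly_Mapping.lookup f s * Poly_Mapping.lookup g q)"
proof -
  have inner: "(\<Sum>q. Poly_Mapping.lookup g q when k = l + q) = (\<Sum>q\<in>Poly_Mapping.keys g. Poly_Mapping.lookup g q when k = l + q)" for l
    by (rule Sum_any.expand_superset) (auto simp: in_keys_iff)
  have "Poly_Mapping.lookup (f * g) k = (\<Sum>l. Poly_Mapping.lookup f l * (\<Sum>q\<in>Poly_Mapping.keys g. Poly_Mapping.lookup g q when k = l + q))"
    by (simp add: lookup_mult inner)
  also have "\<dots> = (\<Sum>l\<in>Poly_Mapping.keys f. Poly_Mapping.lookup f l * (\<Sum>q\<in>Poly_Mapping.keys g. Poly_Mapping.lookup g q when k = l + q))"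
    by (rule Sum_any.expand_superset) (auto simp: in_keys_iff)
  also have "\<dots> = (\<Sum>(l,q)\<in>Poly_Mapping.keys f \<times> Poly_Mapping.keys g. (Poly_Mapping.lookup f l * Poly_Mapping.lookup g q when k = l + q))"
    by (simp only: sum_distrib_left mult_when sum.cartesian_product)
  also have "\<dots> = (\<Sum>(l,q)\<in>(Poly_Mapping.keys f \<times> Poly_Mapping.keys g) \<inter> P. Poly_Mapping.lookup f l * Poly_Mapping.lookup g q)"
  proof (rule sum.mono_neutral_cong_right)
    show "finite (Poly_Mapping.keys f \<times> Poly_Mapping.keys g)" by simp
    show "(Poly_Mapping.keys f \<times> Poly_Mapping.keys g) \<inter> P \<subseteq> Poly_Mapping.keys f \<times> Poly_Mapping.keys g" by (rule Int_lower1)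
    show "\<forall>i\<in>Poly_Mapping.keys f \<times> Poly_Mapping.keys g - (Poly_Mapping.keys f \<times> Poly_Mapping.keys g) \<inter> P.
         (case i of (l, q) \<Rightarrow> Poly_Mapping.lookup f l * Poly_Mapping.lookup g q when k = l + q) = 0"
    proof
      fix i assume i: "i \<in> Poly_Mapping.keys f \<times> Poly_Mapping.keys g - (Poly_Mapping.keys f \<times> Poly_Mapping.keys g) \<inter> P"
      obtain l q where lq: "i = (l, q)" by (cases i)
      have "k \<noteq> l + q" using i lq sub1 by blast
      then show "(case i of (l, q) \<Rightarrow> Poly_Mapping.lookup f l * Poly_Mapping.lookup g q when k = l + q) = 0"
        using lq by simp
    qed
    show "(case x of (l, q) \<Rightarrow> Poly_Mapping.lookup f l * Poly_Mapping.lookup g q when k = l + q) =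
          (case x of (l, q) \<Rightarrow> Poly_Mapping.lookup f l * Poly_Mapping.lookup g q)"
      if "x \<in> (Poly_Mapping.keys f \<times> Poly_Mapping.keys g) \<inter> P" for x
    proof -
      obtain l q where lq: "x = (l, q)" by (cases x)
      have "k = l + q" using that lq sub2 by blast
      then show ?thesis using lq by simp
    qed
  qed
  also have "\<dots> = (\<Sum>(s,q)\<in>P. Poly_Mapping.lookup f s * Poly_Mapping.lookup g q)"
  proof (rule sum.mono_neutral_left)
    show "finite P" by (rule fin)
    show "(Poly_Mapping.keys f \<times> Poly_Mapping.keys g) \<inter> P \<subseteq> P" by (rule Int_lower2)
    show "\<forall>i\<in>P - (Poly_Mapping.keys f \<times> Poly_Mapping.keys g) \<inter> P. (case i of (s, q) \<Rightarrow> Poly_Mapping.lookup f s * Poly_Mapping.lookup g q) = 0"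
    proof
      fix i assume i: "i \<in> P - (Poly_Mapping.keys f \<times> Poly_Mapping.keys g) \<inter> P"
      obtain l q where lq: "i = (l, q)" by (cases i)
      have "l \<notin> Poly_Mapping.keys f \<or> q \<notin> Poly_Mapping.keys g" using i lq by blast
      then show "(case i of (s, q) \<Rightarrow> Poly_Mapping.lookup f s * Poly_Mapping.lookup g q) = 0"
        using lq by (auto simp: in_keys_iff)
    qed
  qed
  finally show ?thesis .
qed

lemma lookup_mult_one:
  fixes f g :: "('v, 'k::field) mpoly"
  assumes "\<And>s q. s \<in> Poly_Mapping.keys f \<Longrightarrow> q \<in> Poly_Mapping.keys g \<Longrightarrow> k = s + q \<Longrightarrow> s = s0 \<and> q = q0"
    and "k = s0 + q0"
  shows "Poly_Mapping.lookup (f * g) k = Poly_Mapping.lookup f s0 * Poly_Mapping.lookup g q0"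
proof -
  have "Poly_Mapping.lookup (f * g) k = (\<Sum>(s,q)\<in>{(s0,q0)}. Poly_Mapping.lookup f s * Poly_Mapping.lookup g q)"
  proof (rule lookup_mult_set)
    show "finite {(s0, q0)}" by simp
    show "(s, q) \<in> {(s0, q0)}" if "s \<in> Poly_Mapping.keys f" "q \<in> Poly_Mapping.keys g" "k = s + q" for s q
      using assms(1)[OF that] by simp
    show "k = s + q" if "(s, q) \<in> {(s0, q0)}" for s q
      using that assms(2) by simp
  qed
  then show ?thesis by simp
qed

lemma lookup_mult_none:
  fixes f g :: "('v, 'k::field) mpoly"
  assumes "\<And>s q. s \<in> Poly_Mapping.keys f \<Longrightarrow> q \<in> Poly_Mapping.keys g \<Longrightarrow> k = s + q \<Longrightarrow> False"
  shows "Poly_Mapping.lookup (f * g) k = 0"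
proof -
  have "Poly_Mapping.lookup (f * g) k = (\<Sum>(s,q)\<in>{}. Poly_Mapping.lookup f s * Poly_Mapping.lookup g q)"
  proof (rule lookup_mult_set)
    show "finite {}" by simp
    show "(s, q) \<in> {}" if "s \<in> Poly_Mapping.keys f" "q \<in> Poly_Mapping.keys g" "k = s + q" for s q
      using assms(1)[OF that] by simp
    show "k = s + q" if "(s, q) \<in> {}" for s q
      using that by simp
  qed
  then show ?thesis by simp
qed

lemma lookup_mult_two:
  fixes f g :: "('v, 'k::field) mpoly"
  assumes "\<And>s q. s \<in> Poly_Mapping.keys f \<Longrightarrow> q \<in> Poly_Mapping.keys g \<Longrightarrow> k = s + q \<Longrightarrow> (s = s0 \<and> q = q0) \<or> (s = s1 \<and> q = q1)"
    and "k = s0 + q0" "k = s1 + q1" "s0 \<noteq> s1"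
  shows "Poly_Mapping.lookup (f * g) k = Poly_Mapping.lookup f s0 * Poly_Mapping.lookup g q0 + Poly_Mapping.lookup f s1 * Poly_Mapping.lookup g q1"
proof -
  have "Poly_Mapping.lookup (f * g) k = (\<Sum>(s,q)\<in>{(s0,q0),(s1,q1)}. Poly_Mapping.lookup f s * Poly_Mapping.lookup g q)"
  proof (rule lookup_mult_set)
    show "finite {(s0, q0), (s1, q1)}" by simp
    show "(s, q) \<in> {(s0, q0), (s1, q1)}" if "s \<in> Poly_Mapping.keys f" "q \<in> Poly_Mapping.keys g" "k = s + q" for s q
      using assms(1)[OF that] by blast
    show "k = s + q" if "(s, q) \<in> {(s0, q0), (s1, q1)}" for s q
      using that assms(2,3) by blast
  qed
  then show ?thesis using assms(4) by simp
qed

lemma mdeg_sum_superset: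
  assumes "finite A" "Poly_Mapping.keys m \<subseteq> A"
  shows "mdeg m = (\<Sum>v\<in>A. Poly_Mapping.lookup m v)"
  unfolding mdeg_def
  by (rule sum.mono_neutral_left) (use assms in \<open>auto simp: in_keys_iff\<close>)

lemma mdeg_add: "mdeg (s + t) = mdeg s + mdeg t"
proof -
  let ?A = "Poly_Mapping.keys s \<union> Poly_Mapping.keys t"
  have "mdeg (s + t) = (\<Sum>v\<in>?A. Poly_Mapping.lookup (s + t) v)"
    by (rule mdeg_sum_superset) (auto dest: keys_add[THEN subsetD])
  also have "\<dots> = (\<Sum>v\<in>?A. Poly_Mapping.lookup s v) + (\<Sum>v\<in>?A. Poly_Mapping.lookup t v)"
    by (simp add: lookup_add sum.distrib)
  also have "\<dots> = mdeg s + mdeg t"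
    by (simp add: mdeg_sum_superset[symmetric])
  finally show ?thesis .
qed

lemma mdeg_zero_iff: "mdeg s = 0 \<longleftrightarrow> s = 0"
proof -
  have "mdeg s = 0 \<longleftrightarrow> (\<forall>v\<in>Poly_Mapping.keys s. Poly_Mapping.lookup s v = 0)"
    unfolding mdeg_def by (rule sum_eq_0_iff) simp
  also have "\<dots> \<longleftrightarrow> Poly_Mapping.keys s = {}"
    by (auto simp only: in_keys_iff)
  also have "\<dots> \<longleftrightarrow> s = 0" by (rule keys_eq_empty)
  finally show ?thesis .
qed

lemma mdeg_ee [simp]: "mdeg (ee v) = 1"
  by (simp add: mdeg_def)

lemma mdeg_zero [simp]: "mdeg 0 = 0"
  by (simp add: mdeg_def)

lemma mdeg_one_ee: "mdeg s = 1 \<Longrightarrow> \<exists>w. s = ee w"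
proof -
  assume h: "mdeg s = 1"
  then have "s \<noteq> 0" by auto
  then obtain w where w: "w \<in> Poly_Mapping.keys s" by (auto simp: poly_mapping_eq_iff fun_eq_iff in_keys_iff)
  have "mdeg s = Poly_Mapping.lookup s w + (\<Sum>v\<in>Poly_Mapping.keys s - {w}. Poly_Mapping.lookup s v)"
    unfolding mdeg_def using w by (simp add: sum.remove)
  moreover have "Poly_Mapping.lookup s w > 0" using w by (auto simp: in_keys_iff)
  ultimately have lw: "Poly_Mapping.lookup s w = 1" and rest: "(\<Sum>v\<in>Poly_Mapping.keys s - {w}. Poly_Mapping.lookup s v) = 0"
    using h by linarith+
  have "\<forall>v\<in>Poly_Mapping.keys s - {w}. Poly_Mapping.lookup s v = 0"
    using rest by simp
  then have "\<And>v. v \<noteq> w \<Longrightarrow> Poly_Mapping.lookup s v = 0" by (auto simp: in_keys_iff)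
  then have "s = ee w" using lw by (auto simp: poly_mapping_eq_iff fun_eq_iff lookup_single when_def)
  then show ?thesis by blast
qed

lemma Var_mult: "(Var u * Var w :: ('v,'k::field) mpoly) = Poly_Mapping.single (ee u + ee w) 1"
  by (simp add: Var_def mult_single)

lemma ee_eq_pt: "(m1::'v \<Rightarrow>\<^sub>0 nat) = m2 \<Longrightarrow> Poly_Mapping.lookup m1 x = Poly_Mapping.lookup m2 x"
  by simp

lemma mono3:
  assumes "distinct [w,a,b]" and eq: "ee w + (ee a + ee b) = ee z + (ee u + ee u')"
    and "\<not>((u = a \<and> u' = w) \<or> (u = w \<and> u' = a) \<or> (u = b \<and> u' = w) \<or> (u = w \<and> u' = b))"
  shows "z = w \<and> ee u + ee u' = ee a + ee b"
proof -
  have Q: "\<And>x. (if w = x then 1 else 0) + ((if a = x then 1 else 0) + (if b = x then 1 else 0)) = (if z = x then 1 else 0) + ((if u = x then 1 else 0) + ((if u' = x then 1 else (0::nat))))"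
    using ee_eq_pt[OF eq] by (simp only: lookup_add lookup_single when_def)
  have d: "w \<noteq> a" "w \<noteq> b" "a \<noteq> b" using assms(1) by auto
  have z: "z = w \<or> z = a \<or> z = b" using Q[of z] by (simp split: if_splits)
  have u: "u = w \<or> u = a \<or> u = b" using Q[of u] by (simp split: if_splits)
  have u': "u' = w \<or> u' = a \<or> u' = b" using Q[of u'] by (simp split: if_splits)
  have le1: "\<And>x. (if w = x then 1 else 0) + ((if a = x then 1 else 0) + (if b = x then 1 else 0)) \<le> (1::nat)"
    using d by auto
  have ge: "(if z = x then 1 else 0) + ((if u = x then 1 else 0) + ((if u' = x then 1 else (0::nat)))) \<le> 1" for x
    using Q[of x] le1[of x] by linarith
  have zu: "z \<noteq> u" using ge[of z] by (auto split: if_splits)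
  have zu': "z \<noteq> u'" using ge[of z] by (auto split: if_splits)
  have uu': "u \<noteq> u'" using ge[of u] by (auto split: if_splits)
  have 1: "z = w \<and> ((u = a \<and> u' = b) \<or> (u = b \<and> u' = a))"
    using z u u' zu zu' uu' assms(3) by blast
  then show ?thesis
  proof (elim conjE disjE)
    assume "z = w" "u = a" "u' = b" then show ?thesis by simp
  next
    assume "z = w" "u = b" "u' = a" then show ?thesis by (simp add: add.commute)
  qed
qed

lemma mono2:
  assumes "c \<noteq> d" and eq: "ee c + ee d = ee z + q"
  shows "(z = c \<and> q = ee d) \<or> (z = d \<and> q = ee c)"
proof -
  have P: "\<And>x. (1 when c = x) + (1 when d = x) = (1 when z = x) + Poly_Mapping.lookup q x"
    using ee_eq_pt[OF eq] by (simp add: lookup_add lookup_single)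
  have "z = c \<or> z = d" using P[of z] by (auto simp: when_def split: if_splits)
  then show ?thesis
  proof
    assume "z = c" then show ?thesis using eq by simp
  next
    assume "z = d" then show ?thesis using eq by (metis add.commute add_left_cancel)
  qed
qed

lemma mono_none:
  assumes "a \<noteq> c" "a \<noteq> d" and eq: "ee c + ee d = (ee a + ee b) + q"
  shows False
  using ee_eq_pt[OF eq, of a] assms by (simp add: lookup_add lookup_single when_def)

lemma mdeg_ee2: "mdeg (ee u + ee w) = 2"
  by (simp only: mdeg_add mdeg_ee one_add_one)

lemma mdeg_deg2:
  assumes "mdeg q = 2" "mdeg k = 2" "k = s + q"
  shows "s = 0 \<and> q = k"
proof -
  have "mdeg s = 0" using assms by (simp add: mdeg_add)
  then show ?thesis using assms by (simp add: mdeg_zero_iff)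
qed

lemma polys_in_add: "p \<in> polys_in V \<Longrightarrow> q \<in> polys_in V \<Longrightarrow> p + q \<in> polys_in V"
  unfolding polys_in_def
proof (intro CollectI ballI)
  fix m
  assume p: "p \<in> {p. \<forall>m\<in>Poly_Mapping.keys p. Poly_Mapping.keys m \<subseteq> V}"
    and q: "q \<in> {p. \<forall>m\<in>Poly_Mapping.keys p. Poly_Mapping.keys m \<subseteq> V}"
    and m: "m \<in> Poly_Mapping.keys (p + q)"
  have "m \<in> Poly_Mapping.keys p \<union> Poly_Mapping.keys q" using keys_add m by fast
  then show "Poly_Mapping.keys m \<subseteq> V" using p q by blast
qed

lemma polys_in_mult: "p \<in> polys_in V \<Longrightarrow> q \<in> polys_in V \<Longrightarrow> p * q \<in> polys_in V"
  unfolding polys_in_def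
proof safe
  fix m x
  assume p: "\<forall>m\<in>Poly_Mapping.keys p. Poly_Mapping.keys m \<subseteq> V"
    and q: "\<forall>m\<in>Poly_Mapping.keys q. Poly_Mapping.keys m \<subseteq> V"
    and m: "m \<in> Poly_Mapping.keys (p * q)" and x: "x \<in> Poly_Mapping.keys m"
  from keys_mult m obtain a b where "m = a + b" "a \<in> Poly_Mapping.keys p" "b \<in> Poly_Mapping.keys q" by blast
  have "x \<in> Poly_Mapping.keys a \<union> Poly_Mapping.keys b" using keys_add x \<open>m = a + b\<close> by fast
  then show "x \<in> V" using p q \<open>a \<in> Poly_Mapping.keys p\<close> \<open>b \<in> Poly_Mapping.keys q\<close> by blast
qed

lemma keys_minus_sub: "Poly_Mapping.keys (p - (q::('v,'k::field) mpoly)) \<subseteq> Poly_Mapping.keys p \<union> Poly_Mapping.keys q"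
proof
  fix m assume "m \<in> Poly_Mapping.keys (p - q)"
  then have "Poly_Mapping.lookup p m - Poly_Mapping.lookup q m \<noteq> 0" by (simp add: in_keys_iff lookup_minus)
  then have "Poly_Mapping.lookup p m \<noteq> 0 \<or> Poly_Mapping.lookup q m \<noteq> 0" by auto
  then show "m \<in> Poly_Mapping.keys p \<union> Poly_Mapping.keys q" by (simp add: in_keys_iff)
qed

lemma polys_in_diff: "p \<in> polys_in V \<Longrightarrow> q \<in> polys_in V \<Longrightarrow> (p::('v,'k::field) mpoly) - q \<in> polys_in V"
  unfolding polys_in_def
proof (intro CollectI ballI)
  fix m
  assume p: "p \<in> {p. \<forall>m\<in>Poly_Mapping.keys p. Poly_Mapping.keys m \<subseteq> V}"
    and q: "q \<in> {p. \<forall>m\<in>Poly_Mapping.keys p. Poly_Mapping.keys m \<subseteq> V}"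
    and m: "m \<in> Poly_Mapping.keys (p - q)"
  have "m \<in> Poly_Mapping.keys p \<union> Poly_Mapping.keys q" using keys_minus_sub m by fast
  then show "Poly_Mapping.keys m \<subseteq> V" using p q by blast
qed

lemma polys_in_zero: "0 \<in> polys_in V"
  unfolding polys_in_def by simp

lemma polys_in_one: "1 \<in> polys_in V"
  unfolding polys_in_def by simp

lemma polys_in_sum: "(\<And>i. i \<in> S \<Longrightarrow> f i \<in> polys_in V) \<Longrightarrow> sum f S \<in> polys_in V"
  by (induction S rule: infinite_finite_induct) (auto intro: polys_in_add polys_in_zero)

lemma polys_in_Var: "v \<in> V \<Longrightarrow> (Var v :: ('v,'k::field) mpoly) \<in> polys_in V"
  unfolding polys_in_def Var_def by simp

lemma ideal_gen_single: "s \<in> S \<Longrightarrow> s \<in> ideal_gen V S"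
  unfolding ideal_gen_def
  by (rule CollectI, rule exI[of _ 1], rule exI[of _ "\<lambda>_. 1"], rule exI[of _ "\<lambda>_. s"])
     (simp add: polys_in_one)

lemma ideal_gen_repr:
  assumes "p \<in> ideal_gen V {g j | j. j < (B::nat)}"
  shows "\<exists>\<alpha>. (\<forall>j<B. \<alpha> j \<in> polys_in V) \<and> p = (\<Sum>j<B. \<alpha> j * g j)"
proof -
  from assms obtain n c s where p: "p = (\<Sum>i<(n::nat). c i * s i)"
    and cs: "\<forall>i<n. c i \<in> polys_in V \<and> s i \<in> {g j | j. j < B}"
    unfolding ideal_gen_def by blast
  have "\<forall>i<n. \<exists>j. j < B \<and> s i = g j" using cs by blast
  then obtain J where J: "\<And>i. i < n \<Longrightarrow> J i < B \<and> s i = g (J i)" by metis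
  define \<alpha> where "\<alpha> j = (\<Sum>i\<in>{i. i \<in> {..<n} \<and> J i = j}. c i)" for j
  have "(\<Sum>j<B. \<alpha> j * g j) = (\<Sum>j<B. (\<Sum>i\<in>{i. i \<in> {..<n} \<and> J i = j}. c i * g (J i)))"
    unfolding \<alpha>_def by (auto simp: sum_distrib_right intro!: sum.cong)
  also have "\<dots> = (\<Sum>i<n. c i * g (J i))"
    by (rule sum.group) (use J in auto)
  also have "\<dots> = p" unfolding p using J by (auto intro!: sum.cong)
  finally have "p = (\<Sum>j<B. \<alpha> j * g j)" by simp
  moreover have "\<forall>j<B. \<alpha> j \<in> polys_in V"
    unfolding \<alpha>_def using cs by (auto intro!: polys_in_sum)
  ultimately show ?thesis by blast
qed

lemma keys_edge_ideal:
  assumes "f \<in> ideal_gen V {Var u * Var v | u v. u \<in> V \<and> v \<in> V \<and> G u v}"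
    and "t \<in> Poly_Mapping.keys (f :: ('v,'k::field) mpoly)" and "mdeg t = 2"
  shows "\<exists>u w. G u w \<and> t = ee u + ee w"
proof -
  from assms(1) obtain n c s where f: "f = (\<Sum>i<(n::nat). c i * s i)"
    and cs: "\<forall>i<n. c i \<in> polys_in V \<and> s i \<in> {Var u * Var v | u v. u \<in> V \<and> v \<in> V \<and> G u v}"
    unfolding ideal_gen_def by blast
  have "Poly_Mapping.lookup f t \<noteq> 0" using assms(2) by (simp add: in_keys_iff)
  then obtain i where i: "i < n" "Poly_Mapping.lookup (c i * s i) t \<noteq> 0"
    unfolding f lookup_sum by (meson sum.not_neutral_contains_not_neutral lessThan_iff)
  from cs i obtain u w where G: "G u w" and s0: "s i = Var u * Var w"
    by blast
  have s: "s i = Poly_Mapping.single (ee u + ee w) 1" using s0 by (simp add: Var_mult)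
  have "t \<in> Poly_Mapping.keys (c i * s i)" using i by (simp add: in_keys_iff)
  with keys_mult obtain x y where "t = x + y" "y \<in> Poly_Mapping.keys (s i)" by blast
  then have "t = x + (ee u + ee w)" using s by simp
  then have "x = 0 \<and> ee u + ee w = t" using mdeg_deg2[OF mdeg_ee2 assms(3)] by blast
  with G show ?thesis by blast
qed

lemma no_lin_res:
  fixes G :: "'v \<Rightarrow> 'v \<Rightarrow> bool" and a b c d :: 'v
  assumes V: "a \<in> V" "b \<in> V" "c \<in> V" "d \<in> V"
    and dst: "distinct [a,b,c,d]"
    and Gab: "G a b" and Gcd: "G c d"
    and nG: "\<not> G a c" "\<not> G c a" "\<not> G a d" "\<not> G d a" "\<not> G b c" "\<not> G c b" "\<not> G b d" "\<not> G d b"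
  shows "\<not> has_linear_resolution V (edge_ideal V G :: ('v,'k::field) mpoly set)"
proof
  assume "has_linear_resolution V (edge_ideal V G :: ('v,'k) mpoly set)"
  then obtain bb :: "nat \<Rightarrow> nat" and g :: "nat \<Rightarrow> ('v,'k) mpoly" and M :: "nat \<Rightarrow> nat \<Rightarrow> nat \<Rightarrow> ('v,'k) mpoly" and n :: nat where
    H: "(\<forall>k>n. bb k = 0) \<and>
       (\<forall>j<bb 0. g j \<in> polys_in V \<and> homogeneous 2 (g j)) \<and>
       ideal_gen V {g j | j. j < bb 0} = edge_ideal V G \<and>
       (\<forall>k\<ge>1. \<forall>i j. (i < bb (k - 1) \<and> j < bb k \<longrightarrow> M k i j \<in> polys_in V \<and> homogeneous 1 (M k i j))
                    \<and> (\<not> (i < bb (k - 1) \<and> j < bb k) \<longrightarrow> M k i j = 0)) \<and>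
       {x \<in> free_mod V (bb 0). (\<Sum>j<bb 0. x j * g j) = 0}
          = mat_apply (M 1) (bb 1) ` free_mod V (bb 1) \<and>
       (\<forall>k\<ge>1. {x \<in> free_mod V (bb k). mat_apply (M k) (bb k) x = (\<lambda>_. 0)}
          = mat_apply (M (Suc k)) (bb (Suc k)) ` free_mod V (bb (Suc k)))"
    unfolding has_linear_resolution_def by (elim exE) (erule that)
  have hg: "\<forall>j<bb 0. g j \<in> polys_in V \<and> homogeneous 2 (g j)"
    using H by (elim conjE) assumption
  have gen: "ideal_gen V {g j | j. j < bb 0} = edge_ideal V G"
    using H by (elim conjE) assumption
  have hM: "\<forall>k\<ge>1. \<forall>i j. (i < bb (k - 1) \<and> j < bb k \<longrightarrow> M k i j \<in> polys_in V \<and> homogeneous 1 (M k i j))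
                    \<and> (\<not> (i < bb (k - 1) \<and> j < bb k) \<longrightarrow> M k i j = 0)"
    using H by (elim conjE) assumption
  have ker: "{x \<in> free_mod V (bb 0). (\<Sum>j<bb 0. x j * g j) = 0}
          = mat_apply (M 1) (bb 1) ` free_mod V (bb 1)"
    using H by (elim conjE) assumption
  define B where "B = bb 0"
  define B1 where "B1 = bb 1"
  define ma where "ma = ee a + ee b"
  define mc where "mc = ee c + ee d"
  define A :: "('v,'k) mpoly" where "A = Var a * Var b"
  define C :: "('v,'k) mpoly" where "C = Var c * Var d"
  have A_single: "A = Poly_Mapping.single ma 1" by (simp add: A_def ma_def Var_mult)
  have C_single: "C = Poly_Mapping.single mc 1" by (simp add: C_def mc_def Var_mult)
  have hM1: "M 1 i l \<in> polys_in V \<and> homogeneous 1 (M 1 i l)" if "i < B" "l < B1" for i l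
    using hM that unfolding B_def B1_def by auto
  have hgB: "g j \<in> polys_in V \<and> homogeneous 2 (g j)" if "j < B" for j
    using hg that unfolding B_def by auto
  have gI: "g j \<in> ideal_gen V {Var u * Var v | u v. u \<in> V \<and> v \<in> V \<and> G u v}" if "j < B" for j
  proof -
    have "g j \<in> ideal_gen V {g j | j. j < bb 0}"
      by (rule ideal_gen_single) (use that B_def in blast)
    then show ?thesis using gen unfolding edge_ideal_def by simp
  qed
  have degg: "mdeg t = 2" if "j < B" "t \<in> Poly_Mapping.keys (g j)" for j t
    using hgB[OF that(1)] that(2) unfolding homogeneous_def by blast
  have keysg: "\<exists>u w. G u w \<and> t = ee u + ee w" if "j < B" "t \<in> Poly_Mapping.keys (g j)" for j t
    by (rule keys_edge_ideal[OF gI[OF that(1)] that(2) degg[OF that]])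
  have AI: "A \<in> ideal_gen V {g j | j. j < B}"
  proof -
    have "A \<in> edge_ideal V G" unfolding edge_ideal_def A_def
      by (rule ideal_gen_single) (use V Gab in blast)
    then show ?thesis using gen B_def by simp
  qed
  have CI: "C \<in> ideal_gen V {g j | j. j < B}"
  proof -
    have "C \<in> edge_ideal V G" unfolding edge_ideal_def C_def
      by (rule ideal_gen_single) (use V Gcd in blast)
    then show ?thesis using gen B_def by simp
  qed
  obtain \<alpha> where \<alpha>p: "\<forall>j<B. \<alpha> j \<in> polys_in V" and \<alpha>s: "A = (\<Sum>j<B. \<alpha> j * g j)"
    using ideal_gen_repr[OF AI] by blast
  obtain \<gamma> where \<gamma>p: "\<forall>j<B. \<gamma> j \<in> polys_in V" and \<gamma>s: "C = (\<Sum>j<B. \<gamma> j * g j)"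
    using ideal_gen_repr[OF CI] by blast
  have Apoly: "A \<in> polys_in V" unfolding A_def using V by (simp add: polys_in_mult polys_in_Var)
  have Cpoly: "C \<in> polys_in V" unfolding C_def using V by (simp add: polys_in_mult polys_in_Var)
  define x where "x j = (if j < B then C * \<alpha> j - A * \<gamma> j else 0)" for j
  have xfree: "x \<in> free_mod V B"
    unfolding free_mod_def x_def using \<alpha>p \<gamma>p Apoly Cpoly
    by (auto intro!: polys_in_diff polys_in_mult)
  have xsum: "(\<Sum>j<B. x j * g j) = 0"
  proof -
    have "(\<Sum>j<B. x j * g j) = (\<Sum>j<B. C * (\<alpha> j * g j) - A * (\<gamma> j * g j))"
      by (rule sum.cong) (simp_all add: x_def algebra_simps)
    also have "\<dots> = C * (\<Sum>j<B. \<alpha> j * g j) - A * (\<Sum>j<B. \<gamma> j * g j)"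
      by (simp add: sum_subtractf sum_distrib_left)
    also have "\<dots> = C * A - A * C" using \<alpha>s \<gamma>s by simp
    also have "\<dots> = 0" by (simp add: mult.commute)
    finally show ?thesis .
  qed
  have "x \<in> mat_apply (M 1) B1 ` free_mod V B1"
    using ker xfree xsum unfolding B_def B1_def by blast
  then obtain y where yfree: "y \<in> free_mod V B1" and xy: "x = mat_apply (M 1) B1 y" by blast
  have xj: "x j = (\<Sum>l<B1. M 1 j l * y l)" for j
    using fun_cong[OF xy, of j] by (simp add: mat_apply_def)
  have syz: "(\<Sum>j<B. M 1 j l * g j) = 0" if l: "l < B1" for l
  proof -
    define el where "el = (\<lambda>j. if j = l then (1::('v,'k) mpoly) else 0)"
    have "el \<in> free_mod V B1" unfolding free_mod_def el_def using l by (auto simp: polys_in_one polys_in_zero)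
    then have "mat_apply (M 1) B1 el \<in> {x \<in> free_mod V B. (\<Sum>j<B. x j * g j) = 0}"
      using ker unfolding B_def B1_def by blast
    moreover have "mat_apply (M 1) B1 el = (\<lambda>i. M 1 i l)"
    proof
      fix i
      have "mat_apply (M 1) B1 el i = (\<Sum>j<B1. if j = l then M 1 i j else 0)"
        unfolding mat_apply_def el_def by (rule sum.cong) auto
      also have "\<dots> = M 1 i l" using l by simp
      finally show "mat_apply (M 1) B1 el i = M 1 i l" .
    qed
    ultimately show ?thesis by simp
  qed
  define p where "p j = Poly_Mapping.lookup (g j) ma" for j
  have deg_ma: "mdeg ma = 2" unfolding ma_def by (rule mdeg_ee2)
  have lx: "Poly_Mapping.lookup (x j) mc = Poly_Mapping.lookup (\<alpha> j) 0" if j: "j < B" for j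
  proof -
    have 1: "Poly_Mapping.lookup (C * \<alpha> j) mc = Poly_Mapping.lookup C mc * Poly_Mapping.lookup (\<alpha> j) 0"
    proof (rule lookup_mult_one)
      show "s = mc \<and> q = 0" if "s \<in> Poly_Mapping.keys C" "q \<in> Poly_Mapping.keys (\<alpha> j)" "mc = s + q" for s q
      proof -
        have "s = mc" using that(1) by (simp add: C_single)
        then show ?thesis using that(3) by (metis add.right_neutral add_left_cancel)
      qed
      show "mc = mc + 0" by simp
    qed
    have 2: "Poly_Mapping.lookup (A * \<gamma> j) mc = 0"
    proof (rule lookup_mult_none)
      show False if "s \<in> Poly_Mapping.keys A" "q \<in> Poly_Mapping.keys (\<gamma> j)" "mc = s + q" for s q
      proof -
        have "s = ma" using that(1) by (simp add: A_single)
        then have "ee c + ee d = (ee a + ee b) + q" using that(3) by (simp add: ma_def mc_def)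
        then show False by (rule mono_none[rotated 2]) (use dst in auto)
      qed
    qed
    have "Poly_Mapping.lookup (x j) mc = Poly_Mapping.lookup (C * \<alpha> j) mc - Poly_Mapping.lookup (A * \<gamma> j) mc"
      using j by (simp add: x_def lookup_minus)
    also have "\<dots> = Poly_Mapping.lookup (\<alpha> j) 0" using 1 2 by (simp add: C_single)
    finally show ?thesis .
  qed
  have one: "(\<Sum>j<B. Poly_Mapping.lookup (\<alpha> j) 0 * p j) = 1"
  proof -
    have "1 = Poly_Mapping.lookup A ma" by (simp add: A_single)
    also have "\<dots> = (\<Sum>j<B. Poly_Mapping.lookup (\<alpha> j * g j) ma)"
      using \<alpha>s by (simp add: lookup_sum)
    also have "\<dots> = (\<Sum>j<B. Poly_Mapping.lookup (\<alpha> j) 0 * p j)"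
    proof (rule sum.cong[OF refl])
      fix j assume "j \<in> {..<B}"
      then have j: "j < B" by simp
      show "Poly_Mapping.lookup (\<alpha> j * g j) ma = Poly_Mapping.lookup (\<alpha> j) 0 * p j"
        unfolding p_def
      proof (rule lookup_mult_one)
        show "s = 0 \<and> q = ma" if "s \<in> Poly_Mapping.keys (\<alpha> j)" "q \<in> Poly_Mapping.keys (g j)" "ma = s + q" for s q
          using mdeg_deg2[OF degg[OF j that(2)] deg_ma that(3)] .
        show "ma = 0 + ma" by simp
      qed
    qed
    finally show ?thesis by simp
  qed
  have claim1: "(\<Sum>j<B. p j * Poly_Mapping.lookup (x j) mc) = 1"
    using one lx by (simp add: mult.commute)
  have ecd: "ee c \<noteq> ee d"
  proof
    assume "ee c = ee d"
    then have "Poly_Mapping.lookup (ee c) c = Poly_Mapping.lookup (ee d) c" by simp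
    then show False using dst by (auto simp add: lookup_single when_def split: if_splits)
  qed
  have lprod: "Poly_Mapping.lookup (M 1 j l * y l) mc =
      Poly_Mapping.lookup (M 1 j l) (ee c) * Poly_Mapping.lookup (y l) (ee d)
    + Poly_Mapping.lookup (M 1 j l) (ee d) * Poly_Mapping.lookup (y l) (ee c)"
    if j: "j < B" and l: "l < B1" for j l
  proof (rule lookup_mult_two)
    show "s = ee c \<and> q = ee d \<or> s = ee d \<and> q = ee c"
      if hs: "s \<in> Poly_Mapping.keys (M 1 j l)" and hq: "q \<in> Poly_Mapping.keys (y l)" and hsq: "mc = s + q" for s q
    proof -
      have "mdeg s = 1" using hM1[OF j l] hs unfolding homogeneous_def by blast
      then obtain z where z: "s = ee z" using mdeg_one_ee by blast
      have "ee c + ee d = ee z + q" using hsq z by (simp add: mc_def)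
      then have "(z = c \<and> q = ee d) \<or> (z = d \<and> q = ee c)" by (rule mono2[rotated]) (use dst in auto)
      then show ?thesis using z by blast
    qed
    show "mc = ee c + ee d" by (simp add: mc_def)
    show "mc = ee d + ee c" by (simp add: mc_def add.commute)
    show "ee c \<noteq> ee d" by (rule ecd)
  qed
  have col: "(\<Sum>j<B. p j * Poly_Mapping.lookup (M 1 j l) (ee w)) = 0" if l: "l < B1" and w: "w = c \<or> w = d" for l w
  proof -
    have dw: "distinct [w,a,b]" using w dst by auto
    have "0 = Poly_Mapping.lookup (\<Sum>j<B. M 1 j l * g j) (ee w + ma)" using syz[OF l] by simp
    also have "\<dots> = (\<Sum>j<B. Poly_Mapping.lookup (M 1 j l * g j) (ee w + ma))" by (simp add: lookup_sum)
    also have "\<dots> = (\<Sum>j<B. p j * Poly_Mapping.lookup (M 1 j l) (ee w))"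
    proof (rule sum.cong[OF refl])
      fix j assume "j \<in> {..<B}"
      then have j: "j < B" by simp
      have "Poly_Mapping.lookup (M 1 j l * g j) (ee w + ma) = Poly_Mapping.lookup (M 1 j l) (ee w) * Poly_Mapping.lookup (g j) ma"
      proof (rule lookup_mult_one)
        show "s = ee w \<and> q = ma"
          if hs: "s \<in> Poly_Mapping.keys (M 1 j l)" and hq: "q \<in> Poly_Mapping.keys (g j)" and hsq: "ee w + ma = s + q" for s q
        proof -
          have "mdeg s = 1" using hM1[OF j l] hs unfolding homogeneous_def by blast
          then obtain z where z: "s = ee z" using mdeg_one_ee by blast
          obtain u u' where G: "G u u'" and q: "q = ee u + ee u'" using keysg[OF j hq] by blast
          have eq: "ee w + (ee a + ee b) = ee z + (ee u + ee u')" using hsq z q by (simp add: ma_def)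
          have nn: "\<not>((u = a \<and> u' = w) \<or> (u = w \<and> u' = a) \<or> (u = b \<and> u' = w) \<or> (u = w \<and> u' = b))"
            using G w nG by auto
          have "z = w \<and> ee u + ee u' = ee a + ee b" by (rule mono3[OF dw eq nn])
          then show ?thesis using z q by (simp add: ma_def)
        qed
        show "ee w + ma = ee w + ma" by simp
      qed
      then show "Poly_Mapping.lookup (M 1 j l * g j) (ee w + ma) = p j * Poly_Mapping.lookup (M 1 j l) (ee w)"
        by (simp add: p_def mult.commute)
    qed
    finally show ?thesis by simp
  qed
  let ?Mc = "\<lambda>j l. Poly_Mapping.lookup (M 1 j l) (ee c)"
  let ?Md = "\<lambda>j l. Poly_Mapping.lookup (M 1 j l) (ee d)"
  let ?Yc = "\<lambda>l. Poly_Mapping.lookup (y l) (ee c)"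
  let ?Yd = "\<lambda>l. Poly_Mapping.lookup (y l) (ee d)"
  have "(\<Sum>j<B. p j * Poly_Mapping.lookup (x j) mc) = (\<Sum>j<B. \<Sum>l<B1. p j * ?Mc j l * ?Yd l + p j * ?Md j l * ?Yc l)"
  proof (rule sum.cong[OF refl])
    fix j assume "j \<in> {..<B}"
    then have j: "j < B" by simp
    have "Poly_Mapping.lookup (x j) mc = (\<Sum>l<B1. Poly_Mapping.lookup (M 1 j l * y l) mc)"
      by (simp add: xj lookup_sum)
    also have "\<dots> = (\<Sum>l<B1. ?Mc j l * ?Yd l + ?Md j l * ?Yc l)"
      by (rule sum.cong[OF refl]) (rule lprod[OF j], simp)
    finally show "p j * Poly_Mapping.lookup (x j) mc = (\<Sum>l<B1. p j * ?Mc j l * ?Yd l + p j * ?Md j l * ?Yc l)"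
      by (simp add: sum_distrib_left distrib_left mult.assoc)
  qed
  also have "\<dots> = (\<Sum>l<B1. \<Sum>j<B. p j * ?Mc j l * ?Yd l + p j * ?Md j l * ?Yc l)"
    by (rule sum.swap)
  also have "\<dots> = (\<Sum>l<B1. (\<Sum>j<B. p j * ?Mc j l) * ?Yd l + (\<Sum>j<B. p j * ?Md j l) * ?Yc l)"
    by (simp add: sum.distrib sum_distrib_right)
  also have "\<dots> = 0"
    using col by simp
  finally have "(\<Sum>j<B. p j * Poly_Mapping.lookup (x j) mc) = 0" .
  with claim1 show False by simp
qed

lemma walk_succ: "walk V E p \<longleftrightarrow> p \<noteq> [] \<and> set p \<subseteq> V \<and> successively E p"
  unfolding walk_def successively_conv_nth by blast

lemma dist_le:
  assumes "walk V E p" "hd p = u" "last p = v"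
  shows "dist V E u v \<le> length p - 1"
proof -
  have "p \<noteq> []" using assms(1) by (simp add: walk_def)
  then have "length p = Suc (length p - 1)" by simp
  then have "\<exists>p'. walk V E p' \<and> hd p' = u \<and> last p' = v \<and> length p' = Suc (length p - 1)"
    using assms by blast
  then show ?thesis unfolding dist_def by (rule Least_le)
qed

lemma dist_ex:
  assumes "walk V E p" "hd p = u" "last p = v"
  shows "\<exists>q. walk V E q \<and> hd q = u \<and> last q = v \<and> length q = Suc (dist V E u v)"
proof -
  have "p \<noteq> []" using assms(1) by (simp add: walk_def)
  then have "length p = Suc (length p - 1)" by simp
  then have ex: "\<exists>n p'. walk V E p' \<and> hd p' = u \<and> last p' = v \<and> length p' = Suc n"
    using assms by blast
  show ?thesis unfolding dist_def by (rule LeastI_ex[OF ex])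
qed

lemma dist_ge:
  assumes "walk V E p" "hd p = u" "last p = v"
    and "\<And>q. walk V E q \<Longrightarrow> hd q = u \<Longrightarrow> last q = v \<Longrightarrow> length q \<ge> k"
  shows "dist V E u v \<ge> k - 1"
proof -
  obtain q where "walk V E q" "hd q = u" "last q = v" "length q = Suc (dist V E u v)"
    using dist_ex[OF assms(1-3)] by blast
  with assms(4)[of q] show ?thesis by simp
qed

lemma walk_rev:
  assumes "simple_graph V E" "walk V E q"
  shows "walk V E (rev q)"
proof -
  have sym: "E x y \<Longrightarrow> E y x" for x y using assms(1) unfolding simple_graph_def by blast
  have "successively E q" using assms(2) by (simp add: walk_succ)
  then have "successively (\<lambda>x y. E y x) q"
    by (rule successively_mono) (rule sym)
  then show ?thesis using assms(2) by (simp add: walk_succ)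
qed

lemma shortcut:
  assumes p: "walk V E p" and q: "walk V E q"
    and i: "i < length p" and j: "j < length p"
    and hq: "hd q = p ! i" and lq: "last q = p ! j"
  shows "walk V E (take i p @ q @ drop (Suc j) p) \<and> hd (take i p @ q @ drop (Suc j) p) = hd p
       \<and> last (take i p @ q @ drop (Suc j) p) = last p
       \<and> length (take i p @ q @ drop (Suc j) p) = i + length q + (length p - Suc j)"
proof -
  have pne: "p \<noteq> []" and pV: "set p \<subseteq> V" and ps: "successively E p" using p by (auto simp: walk_succ)
  have qne: "q \<noteq> []" and qV: "set q \<subseteq> V" and qs: "successively E q" using q by (auto simp: walk_succ)
  have pe: "E (p ! k) (p ! Suc k)" if "Suc k < length p" for k
    using p that unfolding walk_def by blast
  have s1: "successively E (take i p)"
    using ps append_take_drop_id[of i p] successively_append_iff by metis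
  have s3: "successively E (drop (Suc j) p)"
    using ps append_take_drop_id[of "Suc j" p] successively_append_iff by metis
  have c1: "take i p = [] \<or> E (last (take i p)) (hd q)"
  proof (cases i)
    case 0 then show ?thesis by simp
  next
    case (Suc k)
    have "last (take i p) = p ! k" using i Suc by (simp add: take_Suc_conv_app_nth)
    then show ?thesis using pe[of k] i Suc hq by simp
  qed
  have c2: "drop (Suc j) p = [] \<or> E (last q) (hd (drop (Suc j) p))"
  proof (cases "Suc j < length p")
    case True
    then have "hd (drop (Suc j) p) = p ! Suc j" by (simp add: hd_drop_conv_nth)
    then show ?thesis using pe[of j] True lq by simp
  next
    case False then show ?thesis by simp
  qed
  have succ: "successively E (take i p @ q @ drop (Suc j) p)"
    using s1 s3 qs c1 c2 qne by (auto simp: successively_append_iff)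
  have setV: "set (take i p @ q @ drop (Suc j) p) \<subseteq> V"
    using pV qV set_take_subset[of i p] set_drop_subset[of "Suc j" p] by auto
  have W: "walk V E (take i p @ q @ drop (Suc j) p)"
    using succ setV qne by (simp add: walk_succ)
  have H: "hd (take i p @ q @ drop (Suc j) p) = hd p"
  proof (cases i)
    case 0 then show ?thesis using hq qne pne by (simp add: hd_conv_nth[symmetric])
  next
    case (Suc k)
    then have "take i p \<noteq> []" using pne by simp
    then show ?thesis using Suc pne by (cases p) auto
  qed
  have L: "last (take i p @ q @ drop (Suc j) p) = last p"
  proof (cases "Suc j < length p")
    case True
    then have "drop (Suc j) p \<noteq> []" by simp
    then show ?thesis by simp
  next
    case False
    then have lj: "length p - 1 = j" "length p \<le> Suc j" using j by simp_all
    have lp: "last p = p ! j" using pne lj(1) by (simp add: last_conv_nth)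
    have "drop (Suc j) p = []" using lj(2) by simp
    then show ?thesis using lq qne lp by simp
  qed
  have Len: "length (take i p @ q @ drop (Suc j) p) = i + length q + (length p - Suc j)"
    using i by simp
  show ?thesis using W H L Len by blast
qed

lemma gs_edge:
  assumes "simple_graph V E" "E x y"
  shows "graph_square V E x y"
proof -
  have xy: "x \<in> V" "y \<in> V" "x \<noteq> y" using assms unfolding simple_graph_def by blast+
  have w: "walk V E [x, y]" using xy assms(2) unfolding walk_def by (auto simp: nth_Cons split: nat.splits)
  have "dist V E x y \<le> 1" using dist_le[OF w] by simp
  moreover have "dist V E x y \<ge> 2 - 1"
  proof (rule dist_ge[OF w])
    show "length q \<ge> 2" if "walk V E q" "hd q = x" "last q = y" for q
    proof (rule ccontr)
      assume "\<not> 2 \<le> length q"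
      moreover have "q \<noteq> []" using that(1) by (simp add: walk_def)
      ultimately have "length q = Suc 0" by (cases q) (auto simp: not_less_eq_eq)
      then obtain z where "q = [z]" by (auto simp: length_Suc_conv)
      then show False using that xy by simp
    qed
  qed simp_all
  ultimately have "dist V E x y = 1" by simp
  then show ?thesis unfolding graph_square_def using xy by simp
qed

lemma not_gs:
  assumes "walk V E p" "hd p = x" "last p = y"
    and "\<And>q. walk V E q \<Longrightarrow> hd q = x \<Longrightarrow> last q = y \<Longrightarrow> length q \<ge> 4"
  shows "\<not> graph_square V E x y"
proof -
  have "dist V E x y \<ge> 4 - 1" by (rule dist_ge[OF assms])
  then show ?thesis unfolding graph_square_def by simp
qed

lemma graph_part:
  assumes T: "tree V E" and D: "\<not> diam V E \<le> 4"
  shows "\<exists>a b c d. a \<in> V \<and> b \<in> V \<and> c \<in> V \<and> d \<in> V \<and> distinct [a,b,c,d]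
    \<and> graph_square V E a b \<and> graph_square V E c d
    \<and> (\<forall>x\<in>{a,b}. \<forall>y\<in>{c,d}. \<not> graph_square V E x y \<and> \<not> graph_square V E y x)"
proof -
  have fin: "finite V" and ne: "V \<noteq> {}" and sg: "simple_graph V E" and con: "connected_graph V E"
    using T unfolding tree_def by auto
  let ?S = "{dist V E u v | u v. u \<in> V \<and> v \<in> V}"
  have Seq: "?S = (\<lambda>(u,v). dist V E u v) ` (V \<times> V)" by auto
  have finS: "finite ?S" using fin Seq by simp
  have neS: "?S \<noteq> {}" using ne by auto
  have "diam V E \<in> ?S" unfolding diam_def using Max_in[OF finS neS] .
  then obtain u v where uv: "u \<in> V" "v \<in> V" "diam V E = dist V E u v" by auto
  define n where "n = dist V E u v"
  have n5: "n \<ge> 5" using D uv n_def by simp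
  have "\<exists>p0. walk V E p0 \<and> hd p0 = u \<and> last p0 = v"
    using con uv unfolding connected_graph_def by simp
  then obtain p0 where p0: "walk V E p0" "hd p0 = u" "last p0 = v" by (elim exE conjE)
  have "\<exists>q. walk V E q \<and> hd q = u \<and> last q = v \<and> length q = Suc (dist V E u v)"
    by (rule dist_ex[OF p0])
  then obtain p where p: "walk V E p" "hd p = u" "last p = v" "length p = Suc n"
    unfolding n_def by (elim exE conjE)
  have pe: "E (p ! k) (p ! Suc k)" if "Suc k < length p" for k
    using p(1) that unfolding walk_def by blast
  have pV: "p ! k \<in> V" if "k < length p" for k
    using p(1) that unfolding walk_def by auto
  have key: "length q \<ge> 4"
    if q: "walk V E q" "hd q = p ! i" "last q = p ! j" and ij: "i \<le> 1" "n - 1 \<le> j" "j \<le> n" for q i j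
  proof (rule ccontr)
    assume "\<not> 4 \<le> length q"
    then have lq: "length q \<le> 3" by simp
    have SC: "walk V E (take i p @ q @ drop (Suc j) p) \<and> hd (take i p @ q @ drop (Suc j) p) = hd p
       \<and> last (take i p @ q @ drop (Suc j) p) = last p
       \<and> length (take i p @ q @ drop (Suc j) p) = i + length q + (length p - Suc j)"
      by (rule shortcut[OF p(1) q(1) _ _ q(2) q(3)]) (use ij n5 p(4) in auto)
    then have "dist V E u v \<le> length (take i p @ q @ drop (Suc j) p) - 1"
      using p(2,3) dist_le by metis
    also have "\<dots> = i + length q + (length p - Suc j) - 1" using SC by simp
    also have "\<dots> \<le> 4" using lq ij p(4) by simp
    finally show False using n5 n_def by simp
  qed
  have key': "length q \<ge> 4"
    if q: "walk V E q" "hd q = p ! j" "last q = p ! i" and ij: "i \<le> 1" "n - 1 \<le> j" "j \<le> n" for q i j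
  proof -
    have qne: "q \<noteq> []" using q(1) by (simp add: walk_def)
    have "walk V E (rev q)" by (rule walk_rev[OF sg q(1)])
    moreover have "hd (rev q) = p ! i" using q(3) qne by (simp add: hd_rev)
    moreover have "last (rev q) = p ! j" using q(2) qne by (simp add: last_rev)
    ultimately have "length (rev q) \<ge> 4" using key ij by blast
    then show ?thesis by simp
  qed
  have cross: "p ! i \<noteq> p ! j \<and> \<not> graph_square V E (p ! i) (p ! j) \<and> \<not> graph_square V E (p ! j) (p ! i)"
    if ij: "i \<le> 1" "n - 1 \<le> j" "j \<le> n" for i j
  proof (intro conjI)
    have iV: "p ! i \<in> V" and jV: "p ! j \<in> V" using pV ij p(4) n5 by auto
    have "\<exists>w. walk V E w \<and> hd w = p ! i \<and> last w = p ! j"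
      using con iV jV unfolding connected_graph_def by simp
    then obtain w1 where w1: "walk V E w1" "hd w1 = p ! i" "last w1 = p ! j" by (elim exE conjE)
    have "\<exists>w. walk V E w \<and> hd w = p ! j \<and> last w = p ! i"
      using con iV jV unfolding connected_graph_def by simp
    then obtain w2 where w2: "walk V E w2" "hd w2 = p ! j" "last w2 = p ! i" by (elim exE conjE)
    show "\<not> graph_square V E (p ! i) (p ! j)"
      by (rule not_gs[OF w1]) (rule key[OF _ _ _ ij], assumption+)
    show "\<not> graph_square V E (p ! j) (p ! i)"
      by (rule not_gs[OF w2]) (rule key'[OF _ _ _ ij], assumption+)
    show "p ! i \<noteq> p ! j"
    proof
      assume eq: "p ! i = p ! j"
      have "walk V E [p ! i]" using iV unfolding walk_def by simp
      then have "length [p ! i] \<ge> 4" using key[OF _ _ _ ij, of "[p ! i]"] eq by simp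
      then show False by simp
    qed
  qed
  define a where "a = p ! 0"
  define b where "b = p ! 1"
  define c where "c = p ! (n - 1)"
  define d where "d = p ! n"
  have ab: "graph_square V E a b" unfolding a_def b_def
    using gs_edge[OF sg pe[of 0]] p(4) n5 by simp
  have cd: "graph_square V E c d" unfolding c_def d_def
    using gs_edge[OF sg pe[of "n - 1"]] p(4) n5 by simp
  have abne: "a \<noteq> b" using ab unfolding graph_square_def by simp
  have cdne: "c \<noteq> d" using cd unfolding graph_square_def by simp
  have inV: "a \<in> V" "b \<in> V" "c \<in> V" "d \<in> V" unfolding a_def b_def c_def d_def using pV p(4) n5 by auto
  have c1: "a \<noteq> c \<and> \<not> graph_square V E a c \<and> \<not> graph_square V E c a" using cross[of 0 "n - 1"] unfolding a_def c_def by simp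
  have c2: "a \<noteq> d \<and> \<not> graph_square V E a d \<and> \<not> graph_square V E d a" using cross[of 0 n] unfolding a_def d_def by simp
  have c3: "b \<noteq> c \<and> \<not> graph_square V E b c \<and> \<not> graph_square V E c b" using cross[of 1 "n - 1"] unfolding b_def c_def by simp
  have c4: "b \<noteq> d \<and> \<not> graph_square V E b d \<and> \<not> graph_square V E d b" using cross[of 1 n] unfolding b_def d_def by simp
  have "distinct [a,b,c,d]" using abne cdne c1 c2 c3 c4 by simp
  then show ?thesis using inV ab cd c1 c2 c3 c4 by blast
qed

theorem lemma3p9:
  fixes V :: "'v set" and E :: "'v \<Rightarrow> 'v \<Rightarrow> bool"
  assumes "tree V E"
    and "has_linear_resolution V (edge_ideal V (graph_square V E) :: ('v, 'k::field) mpoly set)"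
  shows "diam V E \<le> 4"
proof (rule ccontr)
  assume nd: "\<not> diam V E \<le> 4"
  obtain a b c d where H: "a \<in> V \<and> b \<in> V \<and> c \<in> V \<and> d \<in> V \<and> distinct [a,b,c,d]
    \<and> graph_square V E a b \<and> graph_square V E c d
    \<and> (\<forall>x\<in>{a,b}. \<forall>y\<in>{c,d}. \<not> graph_square V E x y \<and> \<not> graph_square V E y x)"
    using graph_part[OF assms(1) nd] by (elim exE)
  have "\<not> has_linear_resolution V (edge_ideal V (graph_square V E) :: ('v, 'k) mpoly set)"
    by (rule no_lin_res[of a V b c d]) (use H in simp_all)
  then show False using assms(2) by contradiction
qed

end
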